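(* Let $k\geq 2$ be an integer, let $t_0,t_1,\ldots,t_{k-1}$ be arbitrary (real or complex) numbers, and let $(\mathfrak{F}_n^{(k)})_{n\geq 0}$ be the $k$-generalized Fibonacci-like sequence defined by $\mathfrak{F}_i^{(k)}=t_i$ for $0\leq i\leq k-1$ and $\mathfrak{F}_n^{(k)}=\mathfrak{F}_{n-1}^{(k)}+\mathfrak{F}_{n-2}^{(k)}+\cdots+\mathfrak{F}_{n-k}^{(k)}$ for $n\geq k$. Let $\lambda_1,\lambda_2,\ldots,\lambda_k$ be the roots of the characteristic polynomial $P(\lambda)=\lambda^k-\lambda^{k-1}-\cdots-\lambda-1$. Then for all $n\geq k$, $$\mathfrak{F}_n^{(k)}=\sum_{m=1}^{k}\left[\frac{\displaystyle\sum_{p=1}^{k}\left(\lambda_m^{k-p}-\sum_{i=1}^{k-p}\lambda_m^{(k-p)-i}\right)t_{p-1}}{\displaystyle\prod_{j=1,\ j\neq m}^{k}(\lambda_m-\lambda_j)}\right]\lambda_m^n.$$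
   Context: The roots $\lambda_1,\ldots,\lambda_k$ are complex numbers, listed with multiplicity (they are in fact pairwise distinct, so the denominators are nonzero). An empty sum (e.g. $\sum_{i=1}^{0}$ when $p=k$) equals $0$. *)

theory Defs
  imports Complex_Main
begin

end

theory Submission
  imports Defs "HOL-Computational_Algebra.Polynomial"
begin


lemma lagrange_sum:
  fixes lam :: "nat \<Rightarrow> complex"
  assumes fin: "finite I" and inj: "inj_on lam I" and s: "s < card I"
  shows "(\<Sum>m\<in>I. lam m ^ s / (\<Prod>j\<in>I-{m}. (lam m - lam j))) = (if s = card I - 1 then 1 else 0)"
proof -
  define D where "D m = (\<Prod>j\<in>I-{m}. (lam m - lam j))" for m
  define B where "B m = (\<Prod>j\<in>I-{m}. [:-lam j, 1:])" for m
  define L where "L = (\<Sum>m\<in>I. smult (lam m ^ s / D m) (B m))"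
  have degB: "degree (B m) = card I - 1" if "m \<in> I" for m
    unfolding B_def using that fin by (subst degree_prod_sum_eq) (auto simp: card_Diff_singleton)
  have lcB: "coeff (B m) (card I - 1) = 1" if "m \<in> I" for m
    using lead_coeff_prod[of "\<lambda>j. [:-lam j, 1:]" "I-{m}"] degB[OF that] unfolding B_def by simp
  have D0: "D m \<noteq> 0" if "m \<in> I" for m
    unfolding D_def using fin inj that by (auto simp: inj_on_def)
  have polyL: "poly L (lam r) = lam r ^ s" if r: "r \<in> I" for r
  proof -
    have "poly L (lam r) = (\<Sum>m\<in>I. (lam m ^ s / D m) * poly (B m) (lam r))"
      unfolding L_def by (simp add: poly_sum)
    also have "\<dots> = (\<Sum>m\<in>{r}. (lam m ^ s / D m) * poly (B m) (lam r))"
    proof (rule sum.mono_neutral_right)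
      show "\<forall>m\<in>I - {r}. lam m ^ s / D m * poly (B m) (lam r) = 0"
        unfolding B_def using fin r by (auto simp: poly_prod)
    qed (use fin r in auto)
    also have "\<dots> = lam r ^ s"
      using D0[OF r] unfolding B_def D_def by (simp add: poly_prod)
    finally show ?thesis .
  qed
  have degL: "degree L < card I"
  proof -
    have "degree L \<le> card I - 1"
      unfolding L_def
      by (rule degree_sum_le) (use degB fin in \<open>auto intro: order.trans[OF degree_smult_le]\<close>)
    thus ?thesis using s by linarith
  qed
  have "L = monom 1 s"
    by (rule poly_eqI_degree[of "lam ` I"]) (use polyL degL s inj fin in \<open>auto simp: card_image poly_monom degree_monom_eq\<close>)
  hence "coeff L (card I - 1) = (if s = card I - 1 then 1 else 0)" by (simp add: coeff_monom)
  moreover have "coeff L (card I - 1) = (\<Sum>m\<in>I. lam m ^ s / D m)"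
    unfolding L_def coeff_sum coeff_smult by (intro sum.cong refl) (simp add: lcB[simplified])
  ultimately show ?thesis unfolding D_def by simp
qed


lemma real_ineq:
  fixes k :: nat assumes "k \<ge> 2"
  shows "(2 * real k / (real k + 1)) ^ k \<noteq> (real k + 1) / 2"
proof -
  define x where "x = (real k - 1) / (real k + 1)"
  have x: "-1 \<le> x" using assms unfolding x_def by (simp add: field_simps)
  have e: "1 + x = 2 * real k / (real k + 1)" unfolding x_def by (simp add: field_simps)
  have "1 + real k * x \<le> (1 + x) ^ k" by (rule Bernoulli_inequality[OF x])
  moreover have "(real k + 1) / 2 < 1 + real k * x"
  proof -
    have "(real k - 1)^2 > 0" using assms by simp
    hence "(real k + 1) * (real k + 1) < 2 * (real k + 1) + 2 * real k * (real k - 1)"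
      by (simp add: power2_eq_square algebra_simps)
    thus ?thesis unfolding x_def by (simp add: field_simps)
  qed
  ultimately show ?thesis using e by auto
qed

lemma no_double_root:
  fixes k :: nat and mu :: complex
  assumes k: "k \<ge> 2"
    and h1: "(of_nat k + 1) * mu ^ k - 2 * of_nat k * mu ^ (k - 1) = 0"
    and h2: "mu ^ (k + 1) - 2 * mu ^ k + 1 = 0"
  shows False
proof -
  define c :: complex where "c = of_nat k"
  have mu0: "mu \<noteq> 0" using h2 k by (auto simp: power_0_left)
  have c1: "c + 1 \<noteq> 0" unfolding c_def by (metis of_nat_Suc of_nat_eq_0_iff add.commute nat.distinct(1))
  have pk: "mu ^ k = mu * mu ^ (k - 1)" using k by (cases k) auto
  have "mu ^ (k - 1) * ((c + 1) * mu - 2 * c) = 0"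
    using h1 unfolding c_def pk by (simp add: algebra_simps)
  hence "(c + 1) * mu = 2 * c" using mu0 by simp
  hence mu: "mu = 2 * c / (c + 1)" using c1 by (simp add: eq_divide_eq mult.commute)
  have "mu ^ k * (mu - 2) = -1" using h2 by (simp add: algebra_simps)
  moreover have "mu - 2 = - 2 / (c + 1)" unfolding mu using c1 by (simp add: field_simps)
  ultimately have "mu ^ k = (c + 1) / 2" using c1 by (simp add: field_simps)
  hence "complex_of_real ((2 * real k / (real k + 1)) ^ k) = complex_of_real ((real k + 1) / 2)"
    unfolding mu c_def by simp
  hence "(2 * real k / (real k + 1)) ^ k = (real k + 1) / 2" using of_real_eq_iff by blast
  thus False using real_ineq[OF k] by simp
qed

lemma distinct_roots:
  fixes k :: nat and lam :: "nat \<Rightarrow> complex"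
  assumes k: "k \<ge> 2"
    and roots: "\<And>x. x ^ k - (\<Sum>i<k. x ^ i) = (\<Prod>m=1..k. (x - lam m))"
  shows "inj_on lam {1..k}"
proof (rule inj_onI, rule ccontr)
  fix a b assume a: "a \<in> {1..k}" and b: "b \<in> {1..k}" and eq: "lam a = lam b" and ab: "a \<noteq> b"
  define mu where "mu = lam a"
  define p where "p = (\<Prod>m\<in>{1..k}. [:- lam m, 1:])"
  define r where "r = (\<Prod>m\<in>{1..k}-{a}-{b}. [:- lam m, 1:])"
  have "p = [:- lam a, 1:] * (\<Prod>m\<in>{1..k}-{a}. [:- lam m, 1:])"
    unfolding p_def using a by (simp add: prod.remove)
  also have "(\<Prod>m\<in>{1..k}-{a}. [:- lam m, 1:]) = [:- lam b, 1:] * r"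
    unfolding r_def using a b ab by (subst prod.remove[of _ b]) auto
  finally have pr: "p = [:- mu, 1:]^2 * r" using eq unfolding mu_def by (metis power2_eq_square mult.assoc)
  define Q where "Q = [:-1, 1:] * p"
  have polyQ: "poly Q x = x ^ (k + 1) - 2 * x ^ k + 1" for x
  proof -
    have "poly Q x = (x - 1) * (x ^ k - (\<Sum>i<k. x ^ i))"
      unfolding Q_def p_def roots by (simp add: poly_prod algebra_simps)
    also have "\<dots> = (x - 1) * x ^ k - (x ^ k - 1)" by (simp add: power_diff_1_eq algebra_simps)
    finally show ?thesis by (simp add: algebra_simps)
  qed
  have Qeq: "Q = monom 1 (k + 1) - smult 2 (monom 1 k) + 1"
    by (rule poly_eq_poly_eq_iff[THEN iffD1]) (auto simp: fun_eq_iff polyQ poly_monom)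
  have Q2: "Q = [:-mu,1:]^2 * ([:-1,1:]*r)" unfolding Q_def pr by (metis mult.assoc mult.commute)
  have "poly (pderiv Q) mu = 0"
    unfolding Q2 pderiv_mult pderiv_power by simp
  hence h1: "(of_nat k + 1) * mu ^ k - 2 * of_nat k * mu ^ (k - 1) = 0"
    unfolding Qeq by (simp add: pderiv_add pderiv_diff pderiv_smult pderiv_monom poly_monom algebra_simps)
  have h2: "mu ^ (k + 1) - 2 * mu ^ k + 1 = 0"
    using polyQ[of mu] unfolding Q_def pr by simp
  show False using no_double_root[OF k h1 h2] .
qed

lemma H_val:
  fixes S :: "nat \<Rightarrow> complex"
  assumes k: "k \<ge> 2"
    and Sk: "\<And>n. n < k \<Longrightarrow> S n = (if n = k - 1 then 1 else 0)"
    and Srec: "\<And>n. n \<ge> k \<Longrightarrow> S n = (\<Sum>j=1..k. S (n - j))"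
    and p: "p \<in> {1..k}" and i: "i < k"
  shows "S (i + k - p) - (\<Sum>l=1..k-p. S (i + k - p - l)) = (if i = p - 1 then 1 else 0)"
proof (cases "i + 1 \<le> p")
  case True
  have z: "(\<Sum>l=1..k-p. S (i + k - p - l)) = 0"
    by (rule sum.neutral) (use True p i k Sk in auto)
  have s: "S (i + k - p) = (if i = p - 1 then 1 else 0)" using Sk[of "i + k - p"] True p i by auto
  show ?thesis using z s by simp
next
  case False
  have "S (i + k - p) = (\<Sum>j=1..k. S (i + k - p - j))" using False p by (intro Srec) auto
  also have "{1..k} = {1..k-p} \<union> {k-p+1..k}" using p by auto
  also have "(\<Sum>j\<in>{1..k-p} \<union> {k-p+1..k}. S (i + k - p - j))
      = (\<Sum>j=1..k-p. S (i + k - p - j)) + (\<Sum>j=k-p+1..k. S (i + k - p - j))"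
    by (rule sum.union_disjoint) auto
  also have "(\<Sum>j=k-p+1..k. S (i + k - p - j)) = 0"
    by (rule sum.neutral) (use False p i k Sk in auto)
  finally show ?thesis using False p by auto
qed

theorem theorem2:
  fixes k :: nat and t :: "nat \<Rightarrow> complex" and F :: "nat \<Rightarrow> complex"
    and lam :: "nat \<Rightarrow> complex"
  assumes "k \<ge> 2"
    and init: "\<And>i. i < k \<Longrightarrow> F i = t i"
    and rec: "\<And>n. n \<ge> k \<Longrightarrow> F n = (\<Sum>j=1..k. F (n - j))"
    and roots: "\<And>x. x ^ k - (\<Sum>i<k. x ^ i) = (\<Prod>m=1..k. (x - lam m))"
    and "n \<ge> k"
  shows "F n = (\<Sum>m=1..k.
            ((\<Sum>p=1..k. (lam m ^ (k - p) - (\<Sum>i=1..k-p. lam m ^ ((k - p) - i))) * t (p - 1))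
             / (\<Prod>j\<in>{1..k} - {m}. (lam m - lam j))) * lam m ^ n)"
proof -
  note k = \<open>k \<ge> 2\<close>
  define I where "I = {1..k}"
  define D where "D m = (\<Prod>j\<in>{1..k} - {m}. (lam m - lam j))" for m
  define c where "c m = (\<Sum>p=1..k. (lam m ^ (k - p) - (\<Sum>i=1..k-p. lam m ^ ((k - p) - i))) * t (p - 1)) / D m" for m
  define G where "G n = (\<Sum>m=1..k. c m * lam m ^ n)" for n
  define S where "S n = (\<Sum>m=1..k. lam m ^ n / D m)" for n
  have inj: "inj_on lam {1..k}" by (rule distinct_roots[OF k roots])
  have root: "lam m ^ k = (\<Sum>i<k. lam m ^ i)" if "m \<in> {1..k}" for m
  proof -
    have z: "(\<Prod>j=1..k. (lam m - lam j)) = 0" using that by (intro prod_zero) auto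
    have "lam m ^ k - (\<Sum>i<k. lam m ^ i) = 0" using roots[of "lam m"] z by (simp only:)
    thus ?thesis by simp
  qed
  have lamrec: "lam m ^ n = (\<Sum>j=1..k. lam m ^ (n - j))" if m: "m \<in> {1..k}" and n: "n \<ge> k" for m n
  proof -
    have "lam m ^ n = lam m ^ (n - k) * lam m ^ k" using n by (simp flip: power_add)
    also have "\<dots> = (\<Sum>i<k. lam m ^ (n - k + i))" by (simp add: root[OF m] sum_distrib_left power_add)
    also have "\<dots> = (\<Sum>j=1..k. lam m ^ (n - j))"
      by (rule sum.reindex_bij_witness[of _ "\<lambda>j. k - j" "\<lambda>i. k - i"]) (use n in auto)
    finally show ?thesis .
  qed
  have Sk: "S n = (if n = k - 1 then 1 else 0)" if "n < k" for n
    using lagrange_sum[of "{1..k}" lam n] inj that unfolding S_def D_def by simp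
  have Srec: "S n = (\<Sum>j=1..k. S (n - j))" if "n \<ge> k" for n
  proof -
    have "S n = (\<Sum>m=1..k. (\<Sum>j=1..k. lam m ^ (n - j) / D m))"
      unfolding S_def by (intro sum.cong refl) (simp add: lamrec[OF _ that] sum_divide_distrib)
    also have "\<dots> = (\<Sum>j=1..k. S (n - j))" unfolding S_def by (rule sum.swap)
    finally show ?thesis .
  qed
  have Grec: "G n = (\<Sum>j=1..k. G (n - j))" if "n \<ge> k" for n
  proof -
    have "G n = (\<Sum>m=1..k. (\<Sum>j=1..k. c m * lam m ^ (n - j)))"
      unfolding G_def by (intro sum.cong refl) (simp add: lamrec[OF _ that] sum_distrib_left)
    also have "\<dots> = (\<Sum>j=1..k. G (n - j))" unfolding G_def by (rule sum.swap)
    finally show ?thesis .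
  qed
  have Ginit: "G i = t i" if i: "i < k" for i
  proof -
    have "G i = (\<Sum>m=1..k. (\<Sum>p=1..k. t (p - 1) * (lam m ^ (i + k - p) / D m
                 - (\<Sum>l=1..k-p. lam m ^ (i + k - p - l) / D m))))"
      unfolding G_def
    proof (intro sum.cong refl)
      fix m assume m: "m \<in> {1..k}"
      have "c m * lam m ^ i = (\<Sum>p=1..k. t (p - 1) * ((lam m ^ (k - p) - (\<Sum>l=1..k-p. lam m ^ ((k - p) - l))) * lam m ^ i / D m))"
        unfolding c_def sum_divide_distrib sum_distrib_right by (intro sum.cong refl) (simp add: mult_ac)
      also have "\<dots> = (\<Sum>p=1..k. t (p - 1) * (lam m ^ (i + k - p) / D m
                 - (\<Sum>l=1..k-p. lam m ^ (i + k - p - l) / D m)))"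
      proof (intro sum.cong refl)
        fix p assume p: "p \<in> {1..k}"
        have e1: "lam m ^ (k - p) * lam m ^ i = lam m ^ (i + k - p)"
          using p by (simp flip: power_add) (simp add: add.commute)
        have e2: "(\<Sum>l=1..k-p. lam m ^ ((k - p) - l)) * lam m ^ i = (\<Sum>l=1..k-p. lam m ^ (i + k - p - l))"
          unfolding sum_distrib_right
        proof (intro sum.cong refl)
          fix l assume l: "l \<in> {1..k-p}"
          have e: "k - p - l + i = i + k - p - l" using l p by auto
          show "lam m ^ (k - p - l) * lam m ^ i = lam m ^ (i + k - p - l)"
            by (simp only: power_add[symmetric] e)
        qed
        show "t (p - 1) * ((lam m ^ (k - p) - (\<Sum>l=1..k-p. lam m ^ ((k - p) - l))) * lam m ^ i / D m)
          = t (p - 1) * (lam m ^ (i + k - p) / D m - (\<Sum>l=1..k-p. lam m ^ (i + k - p - l) / D m))"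
          by (simp only: left_diff_distrib e1 e2 diff_divide_distrib sum_divide_distrib)
      qed
      finally show "c m * lam m ^ i = (\<Sum>p=1..k. t (p - 1) * (lam m ^ (i + k - p) / D m
                 - (\<Sum>l=1..k-p. lam m ^ (i + k - p - l) / D m)))" .
    qed
    also have "\<dots> = (\<Sum>p=1..k. t (p - 1) * (S (i + k - p) - (\<Sum>l=1..k-p. S (i + k - p - l))))"
      unfolding S_def
      by (subst sum.swap) (intro sum.cong refl, simp add: sum_distrib_left sum_subtractf right_diff_distrib, rule sum.swap)
    also have "\<dots> = (\<Sum>p=1..k. (if p = i + 1 then t (p - 1) else 0))"
      by (intro sum.cong refl) (use H_val[OF k Sk Srec _ i] in auto)
    also have "\<dots> = t i" using i by (simp add: sum.delta')
    finally show ?thesis .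
  qed
  have FG: "F n = G n" for n
  proof (induction n rule: less_induct)
    case (less n)
    show ?case
    proof (cases "n < k")
      case True thus ?thesis using init Ginit by simp
    next
      case False
      hence "F n = (\<Sum>j=1..k. F (n - j))" using rec by simp
      also have "\<dots> = (\<Sum>j=1..k. G (n - j))"
        by (intro sum.cong refl less.IH) (use False k in auto)
      also have "\<dots> = G n" using Grec False by simp
      finally show ?thesis .
    qed
  qed
  show ?thesis using FG[of n] unfolding G_def c_def D_def .
qed

end
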